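(* Let $p$ be prime and $H\le\mathrm{S}_n$ be in $\mathfrak{InP}(\mathrm{C}_p)$ with $|H|=p^s$, and let $M\in\mathrm{M}(s,k,p)$ be a generator matrix of $\gamma(H)$ in standard form. Fix $m\in\{s,s+1,\dots,k-1\}$ and let $J=\{1,2,\dots,m\}\,\dot\cup\,\{u\}\subseteq\{1,\dots,k\}$. Let $f:J\to\{1,\dots,k\}$ be an injection. If there exists $i\in\{1,\dots,s\}$ such that $M_{i,f(u)}\ne0$ and $M_{i,f(j)}M_{j,u}=0$ for all $j\in J\cap\{1,\dots,s\}$, then there is no $\nu\in N_{\mathrm{S}_n}(H)$ with $\Omega_j^\nu=\Omega_{f(j)}$ for all $j\in J$.
   Context: $H\le\mathrm{S}_{n}$, $n=pk$, has orbits $\Omega_1,\dots,\Omega_k$ of size $p$ with each $G_i:=H|_{\Omega_i}$ cyclic of order $p$, ordered so that $|H|_{\Omega_1\cup\dots\cup\Omega_s}|=p^s$. $G=G_1\times\dots\times G_k$, $g_1$ generates $G_1$, $g_i$ is the conjugate of $g_1$ by the involution interchanging $\Omega_1$ and $\Omega_i$ via a bijection witnessing a permutation isomorphism $G_1\to G_i$, and $\gamma:G\to\mathbb{F}_p^k$ is $\gamma(g_1^{r_1}\cdots g_k^{r_k})=(r_1,\dots,r_k)$. $M_{i,j}$ denotes the $(i,j)$ entry; standard form means the first $s$ columns of $M$ form the identity $I_s$; the rows of $M$ form a basis of $\gamma(H)$. *)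

theory Defs
  imports "HOL-Algebra.Sym_Groups" "HOL-Algebra.Group_Action" "HOL-Computational_Algebra.Primes"
begin

definition restr :: "nat set \<Rightarrow> (nat \<Rightarrow> nat) \<Rightarrow> (nat \<Rightarrow> nat)" where
  "restr A h = (\<lambda>x. if x \<in> A then h x else x)"

text \<open>The constituent \<open>H|_A\<close>, realised as permutations of {1..n} supported on A.\<close>
definition constituent :: "(nat \<Rightarrow> nat) set \<Rightarrow> nat set \<Rightarrow> (nat \<Rightarrow> nat) set" where
  "constituent H A = restr A ` H"

text \<open>g_i: conjugate of g_1 by the involution interchanging Omega_1 and Omega_i via phi_i.\<close>
definition conj_gen :: "(nat \<Rightarrow> nat set) \<Rightarrow> (nat \<Rightarrow> nat \<Rightarrow> nat) \<Rightarrow> (nat \<Rightarrow> nat) \<Rightarrow> nat \<Rightarrow> (nat \<Rightarrow> nat)" where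
  "conj_gen \<Omega> \<phi> g1 i =
     (if i = 1 then g1 else
      (\<lambda>x. if x \<in> \<Omega> i then \<phi> i (g1 (the_inv_into (\<Omega> 1) (\<phi> i) x))
           else x))"

definition perm_iso_witness :: "(nat \<Rightarrow> nat) set \<Rightarrow> nat set \<Rightarrow> nat set \<Rightarrow> (nat \<Rightarrow> nat) \<Rightarrow> bool" where
  "perm_iso_witness H A B \<phi> \<longleftrightarrow> bij_betw \<phi> A B \<and>
     (\<lambda>a. \<lambda>x. if x \<in> B then \<phi> (a (the_inv_into A \<phi> x)) else x) ` constituent H A = constituent H B"

text \<open>gamma: h \<mapsto> (r_1,...,r_k) with h = g_1^{r_1} ... g_k^{r_k}, r_j in F_p = {0..<p}.\<close>
definition gamma_rep :: "nat \<Rightarrow> nat \<Rightarrow> (nat \<Rightarrow> nat set) \<Rightarrow> (nat \<Rightarrow> (nat \<Rightarrow> nat)) \<Rightarrow> (nat \<Rightarrow> nat) \<Rightarrow> (nat \<Rightarrow> nat) \<Rightarrow> bool" where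
  "gamma_rep p k \<Omega> g h v \<longleftrightarrow> (\<forall>j\<in>{1..k}. v j < p \<and> (\<forall>x\<in>\<Omega> j. h x = (g j ^^ v j) x))"

definition in_rowspace :: "nat \<Rightarrow> nat \<Rightarrow> nat \<Rightarrow> (nat \<Rightarrow> nat \<Rightarrow> nat) \<Rightarrow> (nat \<Rightarrow> nat) \<Rightarrow> bool" where
  "in_rowspace p s k M v \<longleftrightarrow> (\<exists>c::nat\<Rightarrow>nat. \<forall>j\<in>{1..k}. v j = (\<Sum>i=1..s. c i * M i j) mod p)"

definition rows_independent :: "nat \<Rightarrow> nat \<Rightarrow> nat \<Rightarrow> (nat \<Rightarrow> nat \<Rightarrow> nat) \<Rightarrow> bool" where
  "rows_independent p s k M \<longleftrightarrow> (\<forall>c::nat\<Rightarrow>nat.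
     (\<forall>j\<in>{1..k}. (\<Sum>i=1..s. c i * M i j) mod p = 0) \<longrightarrow> (\<forall>i\<in>{1..s}. c i mod p = 0))"

end

theory Submission
  imports Defs
begin

lemma pow_cover:
  fixes g :: "'a \<Rightarrow> 'a"
  assumes fin: "finite {g^^r | r. True}" and cd: "card {g^^r | r. True} = p"
  shows "{g^^r | r. True} = {g^^r | r. r < p}"
proof -
  let ?S = "{g^^r | r. True}"
  have img: "(\<lambda>r. g^^r) ` {0..p} \<subseteq> ?S" by auto
  have "\<not> inj_on (\<lambda>r. g^^r) {0..p}"
  proof
    assume "inj_on (\<lambda>r. g^^r) {0..p}"
    then have "card ((\<lambda>r. g^^r) ` {0..p}) = p + 1" by (simp add: card_image)
    moreover have "card ((\<lambda>r. g^^r) ` {0..p}) \<le> p" using card_mono[OF fin img] cd by simp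
    ultimately show False by simp
  qed
  then obtain a b where ab: "a \<le> p" "b \<le> p" "a \<noteq> b" "g^^a = g^^b"
    unfolding inj_on_def by auto
  obtain a b where ab: "a < b" "b \<le> p" "g^^a = g^^b"
  proof (cases "a < b")
    case True then show ?thesis using that ab by auto
  next
    case False then show ?thesis using that[of b a] ab by auto
  qed
  define d where "d = b - a"
  have dpos: "d > 0" using ab d_def by simp
  have per: "g^^(a + t) = g^^(a + t mod d)" for t
  proof (induction t rule: less_induct)
    case (less t)
    show ?case
    proof (cases "t < d")
      case True then show ?thesis by simp
    next
      case False
      then obtain t' where t': "t = t' + d" by (metis add.commute le_add_diff_inverse not_less)
      have "g^^(a + t) = g^^t' \<circ> g^^b" using t' d_def ab
        by (metis add.assoc add.commute funpow_add le_add_diff_inverse less_imp_le)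
      also have "\<dots> = g^^t' \<circ> g^^a" using ab by simp
      also have "\<dots> = g^^(a + t')" by (simp add: funpow_add[symmetric] add.commute)
      also have "\<dots> = g^^(a + t' mod d)" using less t' dpos by simp
      finally show ?thesis using t' by simp
    qed
  qed
  have "g^^r \<in> {g^^r | r. r < p}" for r
  proof (cases "r < b")
    case True then show ?thesis using ab by auto
  next
    case False
    then have "g^^r = g^^(a + (r - a) mod d)" using per[of "r - a"] ab by simp
    moreover have "a + (r - a) mod d < p" using dpos d_def ab
      by (metis add_diff_inverse_nat add_less_cancel_left less_le_trans mod_less_divisor not_less_iff_gr_or_eq)
    ultimately show ?thesis by blast
  qed
  then show ?thesis by blast
qed

lemma pow_ord:
  fixes g :: "'a \<Rightarrow> 'a"
  assumes cd: "card {g^^r | r. r < p} = p" and fix_out: "\<forall>x. x \<notin> A \<longrightarrow> g x = x"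
    and r: "r < p" and idA: "\<forall>x\<in>A. (g^^r) x = x"
  shows "r = 0"
proof -
  have eq: "{g^^r | r. r < p} = (\<lambda>r. g^^r) ` {..<p}" by auto
  have inj: "inj_on (\<lambda>r. g^^r) {..<p}"
    by (rule eq_card_imp_inj_on) (use cd eq in auto)
  have out: "(g^^q) x = x" if "x \<notin> A" for q x
    by (induction q) (use fix_out that in auto)
  have "g^^r = g^^0" using idA out by (auto simp: fun_eq_iff)
  then show ?thesis using inj r unfolding inj_on_def by auto
qed
lemma conj_pow:
  fixes \<phi> :: "nat \<Rightarrow> nat" and g :: "nat \<Rightarrow> nat"
  assumes bij: "bij_betw \<phi> A B" and gA: "g ` A \<subseteq> A"
  shows "(\<lambda>x. if x \<in> B then \<phi> ((g^^r) (the_inv_into A \<phi> x)) else x)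
       = (\<lambda>x. if x \<in> B then \<phi> (g (the_inv_into A \<phi> x)) else x)^^r"
proof (induction r)
  case 0
  show ?case using bij by (auto simp: fun_eq_iff f_the_inv_into_f_bij_betw)
next
  case (Suc r)
  have gr: "(g^^r) ` A \<subseteq> A" for r by (induction r) (use gA in auto)
  have inA: "the_inv_into A \<phi> x \<in> A" if "x \<in> B" for x
    using bij that by (metis bij_betw_def the_inv_into_into order_refl)
  have inB: "\<phi> y \<in> B" if "y \<in> A" for y using bij that bij_betwE by blast
  have inv: "the_inv_into A \<phi> (\<phi> y) = y" if "y \<in> A" for y
    using bij that by (simp add: bij_betw_def the_inv_into_f_f)
  show ?case
    unfolding funpow.simps(2) Suc[symmetric]
  proof (rule ext)
    fix x
    show "(if x \<in> B then \<phi> ((g \<circ> g ^^ r) (the_inv_into A \<phi> x)) else x) =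
         ((\<lambda>x. if x \<in> B then \<phi> (g (the_inv_into A \<phi> x)) else x) \<circ>
          (\<lambda>x. if x \<in> B then \<phi> ((g ^^ r) (the_inv_into A \<phi> x)) else x)) x"
    proof (cases "x \<in> B")
      case True
      then have "(g ^^ r) (the_inv_into A \<phi> x) \<in> A" using gr inA by blast
      then show ?thesis using True inB inv by auto
    qed simp
  qed
qed

theorem lemma5p5:
  fixes p n k s m u :: nat
    and H :: "(nat \<Rightarrow> nat) set"
    and \<Omega> :: "nat \<Rightarrow> nat set"
    and g1 :: "nat \<Rightarrow> nat"
    and \<phi> :: "nat \<Rightarrow> nat \<Rightarrow> nat"
    and M :: "nat \<Rightarrow> nat \<Rightarrow> nat"
    and f :: "nat \<Rightarrow> nat"
  assumes prime: "prime p"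
    and n_def: "n = p * k"
    and H_sub: "subgroup H (sym_group n)"
    \<comment> \<open>orbits Omega_1,...,Omega_k of H, each of size p\<close>
    and orb_cover: "(\<Union>i\<in>{1..k}. \<Omega> i) = {1..n}"
    and orb_disj: "\<forall>i\<in>{1..k}. \<forall>j\<in>{1..k}. i \<noteq> j \<longrightarrow> \<Omega> i \<inter> \<Omega> j = {}"
    and orb_orbit: "\<forall>i\<in>{1..k}. \<exists>x. \<Omega> i = {h x | h. h \<in> H}"
    and orb_card: "\<forall>i\<in>{1..k}. card (\<Omega> i) = p"
    \<comment> \<open>each constituent G_i = H|Omega_i is cyclic of order p\<close>
    and G_cyclic: "\<forall>i\<in>{1..k}. card (constituent H (\<Omega> i)) = p \<and>
                     (\<exists>c. constituent H (\<Omega> i) = {c ^^ r | r. r < p})"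
    \<comment> \<open>ordering of the orbits and order of H\<close>
    and s_le: "s \<le> k"
    and order_first: "card (constituent H (\<Union>i\<in>{1..s}. \<Omega> i)) = p ^ s"
    and order_H: "card H = p ^ s"
    \<comment> \<open>generators g_1, g_i = conjugates via permutation isomorphisms\<close>
    and g1_gen: "constituent H (\<Omega> 1) = {g1 ^^ r | r. True}"
    and \<phi>1: "\<forall>x\<in>\<Omega> 1. \<phi> 1 x = x"
    and \<phi>_iso: "\<forall>i\<in>{2..k}. perm_iso_witness H (\<Omega> 1) (\<Omega> i) (\<phi> i)"
    \<comment> \<open>M in M(s,k,p), standard form, rows a basis of gamma(H)\<close>
    and M_entries: "\<forall>i\<in>{1..s}. \<forall>j\<in>{1..k}. M i j < p"
    and M_std: "\<forall>i\<in>{1..s}. \<forall>j\<in>{1..s}. M i j = (if i = j then 1 else 0)"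
    and M_span: "\<forall>v. (\<exists>h\<in>H. gamma_rep p k \<Omega> (conj_gen \<Omega> \<phi> g1) h v) \<longleftrightarrow> in_rowspace p s k M v"
    and M_indep: "rows_independent p s k M"
    \<comment> \<open>J = {1..m} disjoint union {u}, f : J -> {1..k} injective\<close>
    and m_range: "s \<le> m" "m \<le> k - 1"
    and u_range: "u \<in> {1..k}" "u \<notin> {1..m}"
    and f_maps: "f ` ({1..m} \<union> {u}) \<subseteq> {1..k}"
    and f_inj: "inj_on f ({1..m} \<union> {u})"
    and cond: "\<exists>i\<in>{1..s}. M i (f u) \<noteq> 0 \<and>
                 (\<forall>j\<in>({1..m} \<union> {u}) \<inter> {1..s}. (M i (f j) * M j u) mod p = 0)"
  shows "\<not> (\<exists>\<nu>\<in>normalizer (sym_group n) H. \<forall>j\<in>{1..m} \<union> {u}. \<nu> ` \<Omega> j = \<Omega> (f j))"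
proof
  assume "\<exists>\<nu>\<in>normalizer (sym_group n) H. \<forall>j\<in>{1..m} \<union> {u}. \<nu> ` \<Omega> j = \<Omega> (f j)"
  then obtain \<nu> where \<nu>N: "\<nu> \<in> normalizer (sym_group n) H"
    and \<nu>\<Omega>: "\<forall>j\<in>{1..m} \<union> {u}. \<nu> ` \<Omega> j = \<Omega> (f j)" by blast
  have p1: "p > 1" using prime prime_gt_1_nat by blast
  have k1: "1 \<in> {1..k}" using u_range by auto
  define gg where "gg = conj_gen \<Omega> \<phi> g1"
  have gg1: "gg 1 = g1" unfolding gg_def conj_gen_def by simp
  have Hsub: "H \<subseteq> carrier (sym_group n)" using H_sub subgroup.subset by blast
  have g1C: "g1 \<in> constituent H (\<Omega> 1)" proof -
    have "g1^^1 \<in> {g1 ^^ r | r. True}" by blast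
    then show ?thesis using g1_gen by simp
  qed
  then obtain h0 where h0: "h0 \<in> H" "g1 = restr (\<Omega> 1) h0" unfolding constituent_def by blast
  have g1_out: "\<forall>x. x \<notin> \<Omega> 1 \<longrightarrow> g1 x = x" using h0 unfolding restr_def by simp
  obtain x0 where x0: "\<Omega> 1 = {h x0 | h. h \<in> H}" using orb_orbit k1 by blast
  have g1_in: "g1 ` \<Omega> 1 \<subseteq> \<Omega> 1"
  proof
    fix y assume "y \<in> g1 ` \<Omega> 1"
    then obtain z where z: "z \<in> \<Omega> 1" "y = g1 z" by blast
    then obtain h1 where h1: "h1 \<in> H" "z = h1 x0" using x0 by blast
    have "h0 \<otimes>\<^bsub>sym_group n\<^esub> h1 \<in> H" using subgroup.m_closed[OF H_sub] h0 h1 by blast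
    then have "h0 \<circ> h1 \<in> H" by (simp add: sym_group_def)
    moreover have "y = (h0 \<circ> h1) x0" using z h1 h0 unfolding restr_def by simp
    ultimately show "y \<in> \<Omega> 1" using x0 by blast
  qed
  have cardG: "\<forall>j\<in>{1..k}. card (constituent H (\<Omega> j)) = p" using G_cyclic by blast
  have C1: "constituent H (\<Omega> 1) = {g1^^r | r. r < p}"
  proof -
    have cd: "card {g1^^r | r. True} = p" using cardG k1 g1_gen by metis
    then have fin: "finite {g1^^r | r. True}" using p1 card_ge_0_finite[of "{g1^^r | r. True}"] by linarith
    have "{g1^^r | r. True} = {g1^^r | r. r < p}" by (rule pow_cover[OF fin cd])
    then show ?thesis using g1_gen by simp
  qed
  have Cj: "constituent H (\<Omega> j) = {gg j ^^ r | r. r < p} \<and> (\<forall>x. x \<notin> \<Omega> j \<longrightarrow> gg j x = x)"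
    if j: "j \<in> {1..k}" for j
  proof (cases "j = 1")
    case True then show ?thesis using C1 g1_out gg1 by simp
  next
    case False
    then have j2: "j \<in> {2..k}" using j by auto
    let ?C = "\<lambda>a. \<lambda>x. if x \<in> \<Omega> j then \<phi> j (a (the_inv_into (\<Omega> 1) (\<phi> j) x)) else x"
    have pw: "perm_iso_witness H (\<Omega> 1) (\<Omega> j) (\<phi> j)" using \<phi>_iso j2 by blast
    then have bij: "bij_betw (\<phi> j) (\<Omega> 1) (\<Omega> j)"
      and img: "?C ` constituent H (\<Omega> 1) = constituent H (\<Omega> j)"
      unfolding perm_iso_witness_def by auto
    have ggj: "gg j = ?C g1" unfolding gg_def conj_gen_def using False by simp
    have "constituent H (\<Omega> j) = ?C ` {g1^^r | r. r < p}" using img C1 by simp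
    also have "\<dots> = {?C (g1^^r) | r. r < p}" by blast
    also have "\<dots> = {gg j ^^ r | r. r < p}" using conj_pow[OF bij g1_in] ggj by simp
    finally show ?thesis using ggj by simp
  qed
  have B: "\<exists>r<p. \<forall>x\<in>\<Omega> j. h x = (gg j ^^ r) x" if jh: "j \<in> {1..k}" "h \<in> H" for j h
  proof -
    have "restr (\<Omega> j) h \<in> constituent H (\<Omega> j)" using jh unfolding constituent_def by blast
    then obtain r where r: "r < p" "restr (\<Omega> j) h = gg j ^^ r" using Cj[OF jh(1)] by blast
    have "h x = (gg j ^^ r) x" if "x \<in> \<Omega> j" for x
      using r(2)[THEN fun_cong, of x] that by (simp add: restr_def)
    then show ?thesis using r(1) by blast
  qed
  have A: "r = 0" if "j \<in> {1..k}" "r < p" "\<forall>x\<in>\<Omega> j. (gg j ^^ r) x = x" for j r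
  proof -
    have "card {gg j ^^ r | r. r < p} = p" using Cj[OF that(1)] cardG that(1) by metis
    then show ?thesis using pow_ord[of "gg j" p "\<Omega> j" r] Cj[OF that(1)] that by blast
  qed
  have gam: "\<exists>v. gamma_rep p k \<Omega> gg h v" if "h \<in> H" for h
  proof -
    have "\<forall>j\<in>{1..k}. \<exists>r. r < p \<and> (\<forall>x\<in>\<Omega> j. h x = (gg j ^^ r) x)" using B that by blast
    from bchoice[OF this] obtain v where "\<forall>j\<in>{1..k}. v j < p \<and> (\<forall>x\<in>\<Omega> j. h x = (gg j ^^ v j) x)"
      by blast
    then show ?thesis unfolding gamma_rep_def by blast
  qed
  have \<nu>car: "\<nu> permutes {1..n}" using \<nu>N unfolding normalizer_def stabilizer_def sym_group_def by simp
  have \<nu>inj: "inj \<nu>" using \<nu>car permutes_inj by blast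
  have \<nu>eq: "\<nu> <#\<^bsub>sym_group n\<^esub> H #>\<^bsub>sym_group n\<^esub> (inv\<^bsub>sym_group n\<^esub> \<nu>) = H"
    using \<nu>N Hsub unfolding normalizer_def stabilizer_def by (simp del: sym_group_inv_equality)
  have \<nu>c: "\<nu> \<in> carrier (sym_group n)" using \<nu>car by (simp add: sym_group_def)
  have conjH: "\<exists>h\<in>H. \<forall>y. h' (\<nu> y) = \<nu> (h y)" if "h' \<in> H" for h'
  proof -
    have "h' \<in> \<nu> <#\<^bsub>sym_group n\<^esub> H #>\<^bsub>sym_group n\<^esub> (inv' \<nu>)"
      using \<nu>eq that sym_group_inv_equality[OF \<nu>c] by simp
    then obtain h where h: "h \<in> H" "h' = \<nu> \<circ> h \<circ> inv' \<nu>"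
      unfolding r_coset_def l_coset_def by (auto simp: sym_group_def)
    have "h' \<circ> \<nu> = \<nu> \<circ> h \<circ> (inv' \<nu> \<circ> \<nu>)" using h by (simp add: o_assoc)
    also have "\<dots> = \<nu> \<circ> h" using permutes_inv_o(2)[OF \<nu>car] by simp
    finally have "\<forall>y. h' (\<nu> y) = \<nu> (h y)" by (simp add: fun_eq_iff)
    then show ?thesis using h by blast
  qed
  obtain i where i: "i \<in> {1..s}" "M i (f u) \<noteq> 0"
    "\<forall>j\<in>({1..m} \<union> {u}) \<inter> {1..s}. (M i (f j) * M j u) mod p = 0" using cond by blast
  define w where "w = (\<lambda>j. M i j)"
  have "in_rowspace p s k M w"
    unfolding in_rowspace_def
  proof (intro exI ballI)
    fix j assume j: "j \<in> {1..k}"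
    have "(\<Sum>l=1..s. (if l = i then 1 else 0) * M l j) = (\<Sum>l=1..s. if l = i then M l j else 0)"
      by (rule sum.cong) auto
    also have "\<dots> = M i j" using i(1) by simp
    finally show "w j = (\<Sum>l=1..s. (if l = i then 1 else 0) * M l j) mod p"
      using M_entries i(1) j w_def by simp
  qed
  then obtain h' where h': "h' \<in> H" "gamma_rep p k \<Omega> gg h' w" using M_span gg_def by blast
  obtain h where h: "h \<in> H" "\<forall>y. h' (\<nu> y) = \<nu> (h y)" using conjH[OF h'(1)] by blast
  obtain x where x: "gamma_rep p k \<Omega> gg h x" using gam[OF h(1)] by blast
  then have "in_rowspace p s k M x" using M_span h(1) gg_def by blast
  then obtain c where c: "\<forall>j\<in>{1..k}. x j = (\<Sum>l=1..s. c l * M l j) mod p"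
    unfolding in_rowspace_def by blast
  have xl: "x l = c l mod p" if l: "l \<in> {1..s}" for l
  proof -
    have "(\<Sum>q=1..s. c q * M q l) = (\<Sum>q=1..s. if q = l then c q else 0)"
      by (rule sum.cong) (use M_std l in auto)
    also have "\<dots> = c l" using l by simp
    finally show ?thesis using c l s_le by auto
  qed
  have fJ: "f j \<in> {1..k}" if "j \<in> {1..m} \<union> {u}" for j using f_maps that by blast
  have key: "p dvd c l * M l u" if l: "l \<in> {1..s}" for l
  proof -
    have lJ: "l \<in> {1..m} \<union> {u}" using l m_range by auto
    have "(M i (f l) * M l u) mod p = 0" using i(3) lJ l by (meson IntI)
    then have "p dvd M i (f l) \<or> p dvd M l u" using prime prime_dvd_mult_iff by auto
    moreover have "M i (f l) < p" "M l u < p" using M_entries i(1) l fJ[OF lJ] u_range by auto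
    ultimately have "M i (f l) = 0 \<or> M l u = 0" using nat_dvd_not_less by fastforce
    then show ?thesis
    proof
      assume z: "M i (f l) = 0"
      have "\<forall>y\<in>\<Omega> (f l). h' y = y" using h'(2) fJ[OF lJ] z unfolding gamma_rep_def w_def by auto
      have "h z = z" if zl: "z \<in> \<Omega> l" for z
      proof -
        have "\<nu> z \<in> \<Omega> (f l)" using \<nu>\<Omega> lJ zl by blast
        then have "\<nu> (h z) = \<nu> z" using h(2) \<open>\<forall>y\<in>\<Omega> (f l). h' y = y\<close> by metis
        then show ?thesis using \<nu>inj by (simp add: inj_eq)
      qed
      then have "\<forall>z\<in>\<Omega> l. h z = z" by blast
      moreover have "l \<in> {1..k}" using l s_le by auto
      ultimately have "\<forall>z\<in>\<Omega> l. (gg l ^^ x l) z = z" using x unfolding gamma_rep_def by auto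
      then have "x l = 0" using A[of l "x l"] x \<open>l \<in> {1..k}\<close> unfolding gamma_rep_def by auto
      then show ?thesis using xl[OF l] by auto
    qed simp
  qed
  have "x u = (\<Sum>l=1..s. c l * M l u) mod p" using c u_range by blast
  moreover have "p dvd (\<Sum>l=1..s. c l * M l u)" by (rule dvd_sum) (rule key, simp)
  ultimately have xu: "x u = 0" by simp
  have hu: "\<forall>z\<in>\<Omega> u. h z = (gg u ^^ x u) z" using x u_range(1) unfolding gamma_rep_def by blast
  have "\<forall>z\<in>\<Omega> u. h z = z" using hu xu by simp
  have "h' y = y" if y: "y \<in> \<Omega> (f u)" for y
  proof -
    have "y \<in> \<nu> ` \<Omega> u" using \<nu>\<Omega> y by blast
    then obtain z where "z \<in> \<Omega> u" "y = \<nu> z" by blast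
    then show ?thesis using h(2) \<open>\<forall>z\<in>\<Omega> u. h z = z\<close> by simp
  qed
  then have hfu: "\<forall>y\<in>\<Omega> (f u). h' y = y" by blast
  have fu: "f u \<in> {1..k}" using fJ by blast
  have g': "w (f u) < p \<and> (\<forall>y\<in>\<Omega> (f u). h' y = (gg (f u) ^^ w (f u)) y)"
    using h'(2) fu unfolding gamma_rep_def by blast
  then have "\<forall>y\<in>\<Omega> (f u). (gg (f u) ^^ w (f u)) y = y" using hfu by simp
  then have "w (f u) = 0" using A[OF fu] g' by blast
  then show False using i(2) w_def by simp
qed

end
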